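(* Let $\alpha\in\mathbb{R}$ with $\alpha\neq0$, $\beta\ge0$, $0<\mu\le1$, and define $h(\lambda)=\frac{\lambda(\lambda+\beta)^\mu}{(\lambda+\beta)^\mu+\alpha}$ for $\lambda\in\mathbb{C}$ with $\operatorname{Re}(\lambda)>0$. Assume either (a) $\alpha>0$, or (b) $\alpha<0$ and $\alpha+\beta^\mu\ge|\alpha|$. Then $|\arg(h(\lambda))|\le(1+\mu)|\arg(\lambda)|$ for all $\lambda$ with $\operatorname{Re}(\lambda)>0$.
   Context: Complex powers $z^\mu$ and arguments are taken with the principal branch. *)

theory Defs
  imports "HOL-Analysis.Analysis"
begin

definition hfun :: "real \<Rightarrow> real \<Rightarrow> real \<Rightarrow> complex \<Rightarrow> complex" where
  "hfun \<alpha> \<beta> \<mu> lam =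
     lam * (lam + of_real \<beta>) powr (of_real \<mu>) /
       ((lam + of_real \<beta>) powr (of_real \<mu>) + of_real \<alpha>)"

end

theory Submission
  imports Defs
begin

lemma abs_Arg_arctan: "Re z > 0 \<Longrightarrow> \<bar>Arg z\<bar> = arctan (\<bar>Im z\<bar> / Re z)"
  by (simp add: arg_conv_arctan abs_arctan)

lemma Arg_lt_pi2: "Re z > 0 \<Longrightarrow> \<bar>Arg z\<bar> < pi/2"
  using arctan_ubound[of "\<bar>Im z\<bar> / Re z"] by (simp add: abs_Arg_arctan)

lemma key_q:
  fixes w :: complex and \<alpha> :: real
  assumes x: "Re w > 0"
    and c: "\<alpha> > 0 \<or> (\<alpha> < 0 \<and> 2 * \<bar>\<alpha>\<bar> \<le> cmod w)"
  shows "Re (w / (w + of_real \<alpha>)) > 0 \<and> \<bar>Arg (w / (w + of_real \<alpha>))\<bar> \<le> \<bar>Arg w\<bar>"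
proof -
  define x where "x = Re w"
  define y where "y = Im w"
  define n where "n = x^2 + y^2"
  have nw: "cmod w = sqrt n" by (simp add: n_def x_def y_def cmod_def)
  have xpos: "x > 0" using x x_def by simp
  have xn: "x \<le> sqrt n" using complex_Re_le_cmod[of w] nw x_def by simp
  have ineq: "\<bar>\<alpha>\<bar> * x - \<alpha> * x \<le> n"
  proof (cases "\<alpha> > 0")
    case True then show ?thesis using n_def by simp
  next
    case False
    then have a: "\<alpha> < 0" "2 * \<bar>\<alpha>\<bar> \<le> sqrt n" using c nw by auto
    have "2 * \<bar>\<alpha>\<bar> * x \<le> sqrt n * sqrt n"
      by (rule mult_mono[OF a(2) xn]) (use xpos in \<open>simp_all add: n_def\<close>)
    also have "\<dots> = n" unfolding n_def by simp
    finally show ?thesis using a by simp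
  qed
  have ax: "\<bar>\<alpha>\<bar> * x > 0" using c xpos by (auto simp: mult_neg_pos)
  have den: "n + \<alpha> * x > 0" using ineq ax by linarith
  define D where "D = (Re w + \<alpha>)\<^sup>2 + (Im w)\<^sup>2"
  have D0: "D \<noteq> 0"
  proof
    assume "D = 0"
    then have "Re w + \<alpha> = 0" "Im w = 0" unfolding D_def
      using sum_power2_eq_zero_iff by blast+
    then have "Re w = - \<alpha>" "Im w = 0" by linarith+
    then have "n + \<alpha> * x = 0" unfolding n_def x_def y_def by (simp add: power2_eq_square)
    then show False using den by simp
  qed
  have Req: "Re (w / (w + of_real \<alpha>)) = (n + \<alpha> * x) / D"
    unfolding D_def n_def x_def y_def by (simp add: Re_divide power2_eq_square algebra_simps)
  have Imq: "Im (w / (w + of_real \<alpha>)) = (\<alpha> * y) / D"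
    unfolding D_def y_def by (simp add: Im_divide power2_eq_square algebra_simps)
  have Dpos: "D > 0" using D0 unfolding D_def by (simp add: add_nonneg_nonneg less_le)
  have R: "Re (w / (w + of_real \<alpha>)) > 0" using Req den Dpos by simp
  have "\<bar>Im (w / (w + of_real \<alpha>))\<bar> / Re (w / (w + of_real \<alpha>)) = \<bar>\<alpha> * y\<bar> / (n + \<alpha> * x)"
    using Req Imq Dpos den by (simp add: abs_divide)
  also have "\<dots> \<le> \<bar>y\<bar> / x"
  proof -
    have "\<bar>\<alpha> * y\<bar> * x \<le> \<bar>y\<bar> * (n + \<alpha> * x)"
    proof -
      have "\<bar>y\<bar> * (\<bar>\<alpha>\<bar> * x - \<alpha> * x) \<le> \<bar>y\<bar> * n"
        using ineq by (simp add: mult_left_mono)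
      then show ?thesis by (simp add: abs_mult algebra_simps)
    qed
    then show ?thesis using den xpos by (simp add: divide_simps)
  qed
  finally have "arctan (\<bar>Im (w / (w + of_real \<alpha>))\<bar> / Re (w / (w + of_real \<alpha>))) \<le> arctan (\<bar>Im w\<bar> / Re w)"
    by (simp add: arctan_le_iff x_def y_def)
  then show ?thesis using R x by (simp add: abs_Arg_arctan)
qed

theorem lemma3p3:
  fixes \<alpha> \<beta> \<mu> :: real and lam :: complex
  assumes "\<alpha> \<noteq> 0" and "\<beta> \<ge> 0" and "0 < \<mu>" and "\<mu> \<le> 1"
    and "\<alpha> > 0 \<or> (\<alpha> < 0 \<and> \<alpha> + \<beta> powr \<mu> \<ge> \<bar>\<alpha>\<bar>)"
    and "Re lam > 0"
  shows "\<bar>Arg (hfun \<alpha> \<beta> \<mu> lam)\<bar> \<le> (1 + \<mu>) * \<bar>Arg lam\<bar>"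
proof -
  define z where "z = lam + of_real \<beta>"
  have zre: "Re z > 0" "Re z = Re lam + \<beta>" "Im z = Im lam" using assms z_def by auto
  have z0: "z \<noteq> 0" using zre by auto
  have Az: "\<bar>Arg z\<bar> \<le> \<bar>Arg lam\<bar>"
  proof -
    have "\<bar>Im z\<bar> / Re z \<le> \<bar>Im lam\<bar> / Re lam"
      using zre assms by (simp add: frac_le)
    then show ?thesis using zre(1) assms(6) by (simp add: abs_Arg_arctan arctan_le_iff)
  qed
  define w where "w = z powr of_real \<mu>"
  have wexp: "w = exp (of_real \<mu> * Ln z)" using z0 by (simp add: w_def powr_def)
  have ImL: "Im (of_real \<mu> * Ln z) = \<mu> * Arg z" using z0 by (simp add: Arg_eq_Im_Ln)
  have Apz: "\<bar>Arg z\<bar> < pi/2" using Arg_lt_pi2 zre(1) by simp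
  have muA: "\<bar>\<mu> * Arg z\<bar> < pi/2"
  proof -
    have "\<bar>\<mu> * Arg z\<bar> \<le> \<bar>Arg z\<bar>" using assms(3,4)
      by (simp add: abs_mult mult_left_le_one_le)
    then show ?thesis using Apz by simp
  qed
  have Argw: "Arg w = \<mu> * Arg z"
    unfolding wexp using muA ImL by (subst Arg_exp) (auto simp: pi_gt_zero)
  have Rew: "Re w > 0"
    unfolding wexp Re_exp ImL using muA
    by (intro mult_pos_pos exp_gt_zero cos_gt_zero_pi) (auto simp: abs_less_iff)
  have normw: "cmod w = cmod z powr \<mu>"
    unfolding w_def by (simp add: norm_powr_real_powr')
  have c: "\<alpha> > 0 \<or> (\<alpha> < 0 \<and> 2 * \<bar>\<alpha>\<bar> \<le> cmod w)"
  proof (cases "\<alpha> > 0")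
    case False
    then have a: "\<alpha> < 0" "\<alpha> + \<beta> powr \<mu> \<ge> \<bar>\<alpha>\<bar>" using assms(5) by auto
    have "\<beta> \<le> cmod z" using zre assms(6) complex_Re_le_cmod[of z] by simp
    then have "\<beta> powr \<mu> \<le> cmod z powr \<mu>" using assms(2,3) by (simp add: powr_mono2)
    then show ?thesis using a normw by simp
  qed simp
  from key_q[OF Rew c] have q: "Re (w / (w + of_real \<alpha>)) > 0"
     "\<bar>Arg (w / (w + of_real \<alpha>))\<bar> \<le> \<bar>Arg w\<bar>" by auto
  define q where "q = w / (w + of_real \<alpha>)"
  have h: "hfun \<alpha> \<beta> \<mu> lam = lam * q"
    by (simp add: hfun_def q_def w_def z_def)
  have Aq: "\<bar>Arg q\<bar> \<le> \<mu> * \<bar>Arg lam\<bar>"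
  proof -
    have "\<bar>Arg q\<bar> \<le> \<mu> * \<bar>Arg z\<bar>" using q Argw q_def assms(3) by (simp add: abs_mult)
    also have "\<dots> \<le> \<mu> * \<bar>Arg lam\<bar>" using Az assms(3) by simp
    finally show ?thesis .
  qed
  have Al: "\<bar>Arg lam\<bar> < pi/2" using Arg_lt_pi2 assms(6) by simp
  have Aq2: "\<bar>Arg q\<bar> < pi/2" using Arg_lt_pi2 q(1) q_def by simp
  have "Arg (lam * q) = Arg lam + Arg q"
    apply (rule Arg_times)
    using Al Aq2 q(1) q_def assms(6) by auto
  then show ?thesis using h Aq by (simp add: algebra_simps)
qed

end
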